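(* Let $n\ge2$ and let $\phi:\mathbb{R}^n\setminus\{0\}\to\mathbb{C}$ be continuous, homogeneous and even. Assume that for every $1\le k\le n-1$, \[ \operatorname{supp}(\phi)\cap\{\xi\in\mathbb{R}^n\setminus\{0\}:\xi_k=0\}=\emptyset. \] Then the function $\psi:\mathbb{R}^{n-1}\to\mathbb{C}$, $\psi(s_1,\dots,s_{n-1})=\phi(1,s_1,s_1s_2,\dots,s_1s_2\cdots s_{n-1})$, is continuous and compactly supported, and for every $\xi\in\mathbb{R}^n$ with $\xi_k\ne0$ for all $1\le k\le n-1$ we have \[ \phi(\xi_1,\dots,\xi_n)=\psi\Big(\frac{\xi_2}{\xi_1},\frac{\xi_3}{\xi_2},\dots,\frac{\xi_n}{\xi_{n-1}}\Big). \]
   Context: A function $\phi:\mathbb{R}^n\setminus\{0\}\to\mathbb{C}$ is homogeneous if $\phi(\mu\xi)=\phi(\xi)$ for all $\mu>0$, and even if $\phi(-\xi)=\phi(\xi)$. The support $\operatorname{supp}(\phi)$ is the closure, in $\mathbb{R}^n\setminus\{0\}$, of $\{\xi\in\mathbb{R}^n\setminus\{0\}:\phi(\xi)\ne0\}$. *)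

theory Defs
  imports "HOL-Analysis.Analysis"
begin

text \<open>Vectors of R^n are modelled as functions nat => real vanishing at all indices >= n;
  coordinate xi_k of the paper (1 <= k <= n) is xi (k-1). The topology is the product
  topology on nat => real, which restricted to Rn n is the Euclidean topology.\<close>

definition Rn :: "nat \<Rightarrow> (nat \<Rightarrow> real) set" where
  "Rn n = {x. \<forall>i\<ge>n. x i = 0}"

definition homogeneous_on :: "nat \<Rightarrow> ((nat \<Rightarrow> real) \<Rightarrow> complex) \<Rightarrow> bool" where
  "homogeneous_on n \<phi> \<longleftrightarrow>
     (\<forall>\<xi>\<in>Rn n - {\<lambda>_. 0}. \<forall>\<mu>::real. \<mu> > 0 \<longrightarrow> \<phi> (\<lambda>i. \<mu> * \<xi> i) = \<phi> \<xi>)"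

definition even_on :: "nat \<Rightarrow> ((nat \<Rightarrow> real) \<Rightarrow> complex) \<Rightarrow> bool" where
  "even_on n \<phi> \<longleftrightarrow> (\<forall>\<xi>\<in>Rn n - {\<lambda>_. 0}. \<phi> (\<lambda>i. - \<xi> i) = \<phi> \<xi>)"

definition supp_on :: "nat \<Rightarrow> ((nat \<Rightarrow> real) \<Rightarrow> complex) \<Rightarrow> (nat \<Rightarrow> real) set" where
  "supp_on n \<phi> = closure {\<xi> \<in> Rn n - {\<lambda>_. 0}. \<phi> \<xi> \<noteq> 0} \<inter> (Rn n - {\<lambda>_. 0})"

definition psi_of :: "nat \<Rightarrow> ((nat \<Rightarrow> real) \<Rightarrow> complex) \<Rightarrow> (nat \<Rightarrow> real) \<Rightarrow> complex" where
  "psi_of n \<phi> s = \<phi> (\<lambda>i. if i < n then (\<Prod>j<i. s j) else 0)"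

end

theory Submission
  imports Defs
begin

lemma telescope:
  fixes \<xi> :: "nat \<Rightarrow> real"
  assumes "\<forall>k<n - 1. \<xi> k \<noteq> 0" "i < n" and x0: "\<xi> 0 \<noteq> 0"
  shows "(\<Prod>j<i. (if j < n - 1 then \<xi> (Suc j) / \<xi> j else 0)) = \<xi> i / \<xi> 0"
  using assms(2)
proof (induction i)
  case 0
  show ?case using x0 by simp
next
  case (Suc i)
  have "\<xi> i \<noteq> 0" using assms Suc by auto
  then show ?case using Suc by (simp add: field_simps)
qed

lemma compact_box:
  "compact {x::nat\<Rightarrow>real. \<forall>i. x i \<in> (if i < n then {-1..1} else {0})}"
proof -
  have "compactin (product_topology (\<lambda>_. euclidean) UNIV)
          (PiE UNIV (\<lambda>i::nat. if i < n then {-1..1::real} else {0}))"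
    by (subst compactin_PiE) auto
  moreover have "PiE UNIV (\<lambda>i::nat. if i < n then {-1..1::real} else {0})
     = {x::nat\<Rightarrow>real. \<forall>i. x i \<in> (if i < n then {-1..1} else {0})}"
    by (auto simp: PiE_def Pi_def)
  ultimately show ?thesis by (simp add: euclidean_product_topology)
qed

theorem proposition4p2:
  fixes n :: nat and \<phi> :: "(nat \<Rightarrow> real) \<Rightarrow> complex"
  assumes "n \<ge> 2"
    and "continuous_on (Rn n - {\<lambda>_. 0}) \<phi>"
    and "homogeneous_on n \<phi>"
    and "even_on n \<phi>"
    and "\<forall>k<n - 1. supp_on n \<phi> \<inter> {\<xi> \<in> Rn n - {\<lambda>_. 0}. \<xi> k = 0} = {}"
  shows "continuous_on (Rn (n - 1)) (psi_of n \<phi>)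
    \<and> compact (closure {s \<in> Rn (n - 1). psi_of n \<phi> s \<noteq> 0})
    \<and> (\<forall>\<xi>\<in>Rn n. (\<forall>k<n - 1. \<xi> k \<noteq> 0) \<longrightarrow>
          \<phi> \<xi> = psi_of n \<phi> (\<lambda>j. if j < n - 1 then \<xi> (Suc j) / \<xi> j else 0))"
proof (intro conjI)
  define P where "P = (\<lambda>s::nat\<Rightarrow>real. (\<lambda>i. if i < n then (\<Prod>j<i. s j) else 0))"
  have psiP: "psi_of n \<phi> s = \<phi> (P s)" for s unfolding psi_of_def P_def by simp
  have Pin: "P s \<in> Rn n - {\<lambda>_. 0}" for s
  proof -
    have "P s 0 = 1" using assms(1) by (simp add: P_def)
    then have "P s \<noteq> (\<lambda>_. 0)" by (metis zero_neq_one)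
    moreover have "P s \<in> Rn n" by (auto simp: Rn_def P_def)
    ultimately show ?thesis by blast
  qed
  have contP: "continuous_on UNIV P"
    unfolding P_def
  proof (rule continuous_on_coordinatewise_then_product)
    fix i
    show "continuous_on UNIV (\<lambda>x::nat\<Rightarrow>real. if i < n then (\<Prod>j<i. x j) else 0)"
      by (cases "i < n") (auto intro!: continuous_on_prod)
  qed
  show "continuous_on (Rn (n - 1)) (psi_of n \<phi>)"
  proof -
    have "continuous_on UNIV (\<lambda>s. \<phi> (P s))"
      by (rule continuous_on_compose2[OF assms(2) contP]) (use Pin in auto)
    then show ?thesis unfolding psiP by (rule continuous_on_subset) auto
  qed
  show "\<forall>\<xi>\<in>Rn n. (\<forall>k<n - 1. \<xi> k \<noteq> 0) \<longrightarrow>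
          \<phi> \<xi> = psi_of n \<phi> (\<lambda>j. if j < n - 1 then \<xi> (Suc j) / \<xi> j else 0)"
  proof (intro ballI impI)
    fix \<xi> assume xi: "\<xi> \<in> Rn n" and nz: "\<forall>k<n - 1. \<xi> k \<noteq> 0"
    have x0: "\<xi> 0 \<noteq> 0" using nz assms(1) by auto
    have xinz: "\<xi> \<in> Rn n - {\<lambda>_. 0}" using xi x0 by auto
    have eq: "P (\<lambda>j. if j < n - 1 then \<xi> (Suc j) / \<xi> j else 0) = (\<lambda>i. (1 / \<xi> 0) * \<xi> i)"
    proof
      fix i
      show "P (\<lambda>j. if j < n - 1 then \<xi> (Suc j) / \<xi> j else 0) i = (1 / \<xi> 0) * \<xi> i"
        using telescope[OF nz _ x0, of i] xi by (auto simp: P_def Rn_def)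
    qed
    show "\<phi> \<xi> = psi_of n \<phi> (\<lambda>j. if j < n - 1 then \<xi> (Suc j) / \<xi> j else 0)"
      unfolding psiP eq
    proof (cases "\<xi> 0 > 0")
      case True
      then have "1 / \<xi> 0 > 0" by simp
      have "\<phi> (\<lambda>i. 1 / \<xi> 0 * \<xi> i) = \<phi> \<xi>"
        by (rule bspec[OF assms(3)[unfolded homogeneous_on_def] xinz, rule_format, OF \<open>1 / \<xi> 0 > 0\<close>])
      then show "\<phi> \<xi> = \<phi> (\<lambda>i. 1 / \<xi> 0 * \<xi> i)" by simp
    next
      case False
      then have neg: "-1 / \<xi> 0 > 0" using x0 by (simp add: field_simps)
      have h: "\<phi> (\<lambda>i. (-1 / \<xi> 0) * \<xi> i) = \<phi> \<xi>"
        by (rule bspec[OF assms(3)[unfolded homogeneous_on_def] xinz, rule_format, OF neg])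
      have m: "(\<lambda>i. (-1 / \<xi> 0) * \<xi> i) \<in> Rn n - {\<lambda>_. 0}"
      proof -
        have "(-1 / \<xi> 0) * \<xi> 0 \<noteq> 0" using x0 by simp
        then have "(\<lambda>i. (-1 / \<xi> 0) * \<xi> i) \<noteq> (\<lambda>_. 0)" by metis
        moreover have "(\<lambda>i. (-1 / \<xi> 0) * \<xi> i) \<in> Rn n" using xi by (simp add: Rn_def)
        ultimately show ?thesis by simp
      qed
      have "\<phi> (\<lambda>i. - ((-1 / \<xi> 0) * \<xi> i)) = \<phi> (\<lambda>i. (-1 / \<xi> 0) * \<xi> i)"
        using bspec[OF assms(4)[unfolded even_on_def] m] by simp
      moreover have "(\<lambda>i. - ((-1 / \<xi> 0) * \<xi> i)) = (\<lambda>i. 1 / \<xi> 0 * \<xi> i)" by auto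
      ultimately show "\<phi> \<xi> = \<phi> (\<lambda>i. 1 / \<xi> 0 * \<xi> i)" using h by simp
    qed
  qed
  show "compact (closure {s \<in> Rn (n - 1). psi_of n \<phi> s \<noteq> 0})"
  proof -
    define A where "A = {\<xi> \<in> Rn n - {\<lambda>_. 0}. \<phi> \<xi> \<noteq> 0}"
    define B where "B = {x::nat\<Rightarrow>real. \<forall>i. x i \<in> (if i < n then {-1..1} else {0})}"
    define S where "S = B \<inter> {x. (\<Sum>i<n. (x i)^2) = 1}"
    define K where "K = closure A \<inter> S"
    define R where "R = (\<lambda>x::nat\<Rightarrow>real. (\<lambda>j. if j < n - 1 then x (Suc j) / x j else 0))"
    have cont_coord: "continuous_on X (\<lambda>x::nat\<Rightarrow>real. x i)" for X i
      by (rule continuous_on_subset[OF continuous_on_product_coordinates]) auto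
    have "closed {x::nat\<Rightarrow>real. (\<Sum>i<n. (x i)^2) = 1}"
      by (intro closed_Collect_eq continuous_on_sum continuous_on_power cont_coord continuous_on_const)
    then have cS: "compact S" unfolding S_def B_def
      by (rule compact_Int_closed[OF compact_box])
    have Sin: "S \<subseteq> Rn n - {\<lambda>_. 0}"
    proof
      fix x assume x: "x \<in> S"
      then have xb: "\<forall>i. x i \<in> (if i < n then {-1..1} else {0})" by (simp add: S_def B_def)
      have "x \<in> Rn n" unfolding Rn_def
      proof (intro CollectI allI impI)
        fix i assume "n \<le> i"
        then show "x i = 0" using xb[rule_format, of i] by simp
      qed
      moreover have "x \<noteq> (\<lambda>_. 0)" using x by (auto simp: S_def)
      ultimately show "x \<in> Rn n - {\<lambda>_. 0}" by blast
    qed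
    have suppeq: "supp_on n \<phi> = closure A \<inter> (Rn n - {\<lambda>_. 0})"
      unfolding supp_on_def A_def by simp
    have Knz: "x j \<noteq> 0" if "x \<in> K" "j < n - 1" for x j
    proof -
      have "x \<in> supp_on n \<phi>" using that Sin unfolding suppeq K_def by blast
      moreover have "x \<in> Rn n - {\<lambda>_. 0}" using that Sin unfolding K_def by blast
      ultimately have "x \<in> supp_on n \<phi> \<inter> {\<xi> \<in> Rn n - {\<lambda>_. 0}. \<xi> j = 0}" if "x j = 0"
        using that by simp
      then show ?thesis using assms(5) that(2) by auto
    qed
    have cK: "compact K" unfolding K_def by (rule closed_Int_compact[OF closed_closure cS])
    have contR: "continuous_on K R"
      unfolding R_def
    proof (rule continuous_on_coordinatewise_then_product)
      fix i
      show "continuous_on K (\<lambda>x. if i < n - 1 then x (Suc i) / x i else 0)"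
      proof (cases "i < n - 1")
        case True
        then show ?thesis
          using continuous_on_divide[OF cont_coord[of K "Suc i"] cont_coord[of K i]] Knz by simp
      next
        case False
        then show ?thesis by simp
      qed
    qed
    have cRK: "compact (R ` K)" by (rule compact_continuous_image[OF contR cK])
    have sub: "{s \<in> Rn (n - 1). psi_of n \<phi> s \<noteq> 0} \<subseteq> R ` K"
    proof
      fix s assume "s \<in> {s \<in> Rn (n - 1). psi_of n \<phi> s \<noteq> 0}"
      then have sR: "s \<in> Rn (n - 1)" and ps: "\<phi> (P s) \<noteq> 0" by (auto simp: psiP)
      define x where "x = P s"
      define N where "N = sqrt (\<Sum>i<n. (x i)^2)"
      have x0: "x 0 = 1" using assms(1) by (simp add: x_def P_def)
      have "(x 0)^2 \<le> (\<Sum>i<n. (x i)^2)"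
        by (rule member_le_sum) (use assms(1) in auto)
      then have S1: "1 \<le> (\<Sum>i<n. (x i)^2)" using x0 by simp
      then have Npos: "N > 0" unfolding N_def by simp
      have N2: "N^2 = (\<Sum>i<n. (x i)^2)" unfolding N_def using S1 by simp
      define y where "y = (\<lambda>i. (1/N) * x i)"
      have phy: "\<phi> y = \<phi> x"
        using bspec[OF assms(3)[unfolded homogeneous_on_def] Pin[of s], rule_format, of "1/N"] Npos unfolding y_def x_def by simp
      have "y \<in> Rn n" using Pin[of s] by (auto simp: y_def x_def Rn_def)
      moreover have "y \<noteq> (\<lambda>_. 0)"
      proof
        assume "y = (\<lambda>_. 0)"
        then have "y 0 = 0" by simp
        then show False using x0 Npos by (simp add: y_def)
      qed
      ultimately have yA: "y \<in> A" using phy ps unfolding A_def x_def by simp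
      have yB: "y \<in> B" unfolding B_def
      proof (intro CollectI allI)
        fix i
        show "y i \<in> (if i < n then {-1..1} else {0})"
        proof (cases "i < n")
          case True
          have "(x i)^2 \<le> (\<Sum>i<n. (x i)^2)"
            by (rule member_le_sum) (use True in auto)
          then have "\<bar>x i\<bar> \<le> N" unfolding N_def by (metis real_sqrt_abs real_sqrt_le_mono)
          then have "\<bar>y i\<bar> \<le> 1" using Npos by (simp add: y_def abs_mult field_simps)
          then show ?thesis using True by auto
        next
          case False
          then show ?thesis by (simp add: y_def x_def P_def)
        qed
      qed
      have "(\<Sum>i<n. (y i)^2) = (\<Sum>i<n. (x i)^2) / N^2"
        by (simp add: y_def power_mult_distrib power_divide sum_divide_distrib)
      then have "(\<Sum>i<n. (y i)^2) = 1" using S1 N2 Npos by simp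
      then have yK: "y \<in> K" using yA yB unfolding K_def S_def by (auto intro: closure_subset[THEN subsetD])
      have "R y = s"
      proof
        fix j
        show "R y j = s j"
        proof (cases "j < n - 1")
          case True
          have "y j \<noteq> 0" using Knz yK True by blast
          then have xj: "x j \<noteq> 0" by (simp add: y_def)
          have "x j = (\<Prod>k<j. s k)" "x (Suc j) = (\<Prod>k<Suc j. s k)"
            using True by (auto simp: x_def P_def)
          then have "x (Suc j) = x j * s j" by simp
          then show ?thesis using True xj Npos by (simp add: R_def y_def)
        next
          case False
          then show ?thesis using sR by (simp add: R_def Rn_def)
        qed
      qed
      then show "s \<in> R ` K" using yK by blast
    qed
    have "closure {s \<in> Rn (n - 1). psi_of n \<phi> s \<noteq> 0} \<subseteq> R ` K"
      by (rule closure_minimal[OF sub compact_imp_closed[OF cRK]])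
    then have eqc: "closure {s \<in> Rn (n - 1). psi_of n \<phi> s \<noteq> 0}
       = R ` K \<inter> closure {s \<in> Rn (n - 1). psi_of n \<phi> s \<noteq> 0}" by blast
    show ?thesis by (subst eqc) (rule compact_Int_closed[OF cRK closed_closure])
  qed
qed

end
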